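(* Let $q=(V_q,E_q,L_q)$ be a query hypergraph, $H=(V_H,E_H,L_H)$ a data hypergraph, and $M:E_q\to E_H$ any map. Then $M$ is an embedding of $q$ in $H$ if and only if $Sig\big(\bigcap_{e\in S}e\big)=Sig\big(\bigcap_{e\in S}M(e)\big)$ for every non-empty subset $S\subseteq E_q$.
   Context: A (vertex-labeled) hypergraph is a triple $H=(V,E,L)$ where $V$ is a finite set, $E$ is a set of non-empty subsets of $V$ (hyperedges, no repeated hyperedges) with $\bigcup_{e\in E}e=V$, and $L:V\to\Sigma$ assigns each vertex a label. For $S\subseteq V$, $Sig(S)$ is the multiset of labels $\{L(v)\mid v\in S\}$ (with multiplicity). A map $M:E_q\to E_H$ is an embedding of $q$ in $H$ if there exists an injective map $\phi:V_q\to V_H$ with $L_H(\phi(u))=L_q(u)$ for all $u\in V_q$ and $\{\phi(u):u\in e\}=M(e)$ for every $e\in E_q$. *)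

theory Defs
  imports Main "HOL-Library.Multiset"
begin

definition hypergraph :: "'v set \<Rightarrow> 'v set set \<Rightarrow> bool" where
  "hypergraph V E \<longleftrightarrow> finite V \<and> (\<forall>e\<in>E. e \<noteq> {} \<and> e \<subseteq> V) \<and> \<Union>E = V"

definition Sig :: "('v \<Rightarrow> 'l) \<Rightarrow> 'v set \<Rightarrow> 'l multiset" where
  "Sig L S = image_mset L (mset_set S)"

definition embedding ::
  "'v set \<Rightarrow> 'v set set \<Rightarrow> ('v \<Rightarrow> 'l) \<Rightarrow> 'w set \<Rightarrow> 'w set set \<Rightarrow> ('w \<Rightarrow> 'l)
   \<Rightarrow> ('v set \<Rightarrow> 'w set) \<Rightarrow> bool" where
  "embedding Vq Eq Lq VH EH LH M \<longleftrightarrow>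
     (\<exists>\<phi>. inj_on \<phi> Vq \<and> \<phi> ` Vq \<subseteq> VH \<and> (\<forall>u\<in>Vq. LH (\<phi> u) = Lq u)
          \<and> (\<forall>e\<in>Eq. \<phi> ` e = M e))"

end

theory Submission
  imports Defs
begin

lemma cnt_Sig: "finite A \<Longrightarrow> count (Sig f A) l = card {x\<in>A. f x = l}"
  unfolding Sig_def
proof (induction A rule: finite_induct)
  case empty
  then show ?case by simp
next
  case (insert x F)
  have e: "{y\<in>insert x F. f y = l} = (if f x = l then insert x {y\<in>F. f y = l} else {y\<in>F. f y = l})"
    by auto
  have "x \<notin> {y\<in>F. f y = l}" using insert by simp
  moreover have "finite {y\<in>F. f y = l}" using insert by simp
  ultimately show ?case using insert e by (simp del: mem_Collect_eq)
qed

lemma Sig_inj_image: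
  assumes "inj_on \<phi> X" "\<forall>u\<in>X. LH (\<phi> u) = Lq u"
  shows "Sig LH (\<phi> ` X) = Sig Lq X"
proof -
  have "Sig LH (\<phi> ` X) = image_mset LH (image_mset \<phi> (mset_set X))"
    unfolding Sig_def using assms(1) by (simp add: image_mset_mset_set)
  also have "\<dots> = image_mset Lq (mset_set X)"
  proof (cases "finite X")
    case True
    then show ?thesis using assms(2) by (simp add: multiset.map_comp, intro image_mset_cong) auto
  next
    case False
    then show ?thesis by simp
  qed
  finally show ?thesis unfolding Sig_def .
qed

theorem theorem1:
  fixes Vq :: "'v set" and Eq :: "'v set set" and Lq :: "'v \<Rightarrow> 'l"
    and VH :: "'w set" and EH :: "'w set set" and LH :: "'w \<Rightarrow> 'l"
    and M :: "'v set \<Rightarrow> 'w set"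
  assumes "hypergraph Vq Eq"
    and "hypergraph VH EH"
    and "\<forall>e\<in>Eq. M e \<in> EH"
  shows "embedding Vq Eq Lq VH EH LH M \<longleftrightarrow>
         (\<forall>S. S \<subseteq> Eq \<and> S \<noteq> {} \<longrightarrow> Sig Lq (\<Inter>S) = Sig LH (\<Inter>(M ` S)))"
proof
  assume "embedding Vq Eq Lq VH EH LH M"
  then obtain \<phi> where inj: "inj_on \<phi> Vq" and lab: "\<forall>u\<in>Vq. LH (\<phi> u) = Lq u"
    and me: "\<forall>e\<in>Eq. \<phi> ` e = M e" unfolding embedding_def by blast
  have eV: "\<forall>e\<in>Eq. e \<subseteq> Vq" using assms(1) unfolding hypergraph_def by blast
  show "\<forall>S. S \<subseteq> Eq \<and> S \<noteq> {} \<longrightarrow> Sig Lq (\<Inter>S) = Sig LH (\<Inter>(M ` S))"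
  proof (intro allI impI)
    fix S assume S: "S \<subseteq> Eq \<and> S \<noteq> {}"
    then obtain j where j: "j \<in> S" by blast
    have sub: "\<Inter>S \<subseteq> Vq" using S eV j by blast
    have "\<phi> ` (\<Inter>S) = \<Inter>((\<lambda>e. \<phi> ` e) ` S)"
      using image_INT[of \<phi> Vq S "\<lambda>e. e" j] inj S eV j by auto
    also have "\<dots> = \<Inter>(M ` S)" using me S by (metis (no_types, lifting) image_cong subsetD)
    finally have "\<phi> ` (\<Inter>S) = \<Inter>(M ` S)" .
    moreover have "Sig LH (\<phi> ` (\<Inter>S)) = Sig Lq (\<Inter>S)"
      by (rule Sig_inj_image) (use inj lab sub in \<open>auto intro: inj_on_subset\<close>)
    ultimately show "Sig Lq (\<Inter>S) = Sig LH (\<Inter>(M ` S))" by simp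
  qed
next
  assume H: "\<forall>S. S \<subseteq> Eq \<and> S \<noteq> {} \<longrightarrow> Sig Lq (\<Inter>S) = Sig LH (\<Inter>(M ` S))"
  have fVq: "finite Vq" and eV: "\<forall>e\<in>Eq. e \<subseteq> Vq" and UVq: "\<Union>Eq = Vq"
    using assms(1) unfolding hypergraph_def by auto
  have fVH: "finite VH" and MV: "\<forall>e\<in>Eq. M e \<subseteq> VH"
    using assms(2,3) unfolding hypergraph_def by auto
  have "Eq \<subseteq> Pow Vq" using eV by blast
  then have fEq: "finite Eq" by (rule finite_subset) (simp add: fVq)
  define ty where "ty v = {e\<in>Eq. v \<in> e}" for v
  define ty' where "ty' w = {e\<in>Eq. w \<in> M e}" for w
  define A where "A S l = {v\<in>Vq. ty v = S \<and> Lq v = l}" for S l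
  define B where "B S l = {w\<in>VH. ty' w = S \<and> LH w = l}" for S l
  define U where "U S = {T. S \<subseteq> T \<and> T \<subseteq> Eq}" for S
  have fA: "finite (A S l)" for S l using fVq unfolding A_def by auto
  have fB: "finite (B S l)" for S l using fVH unfolding B_def by auto
  have fU: "finite (U S)" for S using fEq unfolding U_def by auto
  have cntq: "card {v\<in>\<Inter>S. Lq v = l} = (\<Sum>T\<in>U S. card (A T l))"
    if S: "S \<subseteq> Eq" "S \<noteq> {}" for S l
  proof -
    have "{v\<in>\<Inter>S. Lq v = l} = (\<Union>T\<in>U S. A T l)"
    proof (rule set_eqI, rule iffI)
      fix v assume "v \<in> {v\<in>\<Inter>S. Lq v = l}"
      then have v: "\<forall>e\<in>S. v\<in>e" "Lq v = l" by auto
      obtain e where "e\<in>S" using S by blast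
      then have "v \<in> Vq" using v S eV by blast
      then have "v \<in> A (ty v) l" using v unfolding A_def by simp
      moreover have "ty v \<in> U S" using v S unfolding U_def ty_def by blast
      ultimately show "v \<in> (\<Union>T\<in>U S. A T l)" by blast
    next
      fix v assume "v \<in> (\<Union>T\<in>U S. A T l)"
      then obtain T where "T\<in>U S" "v \<in> A T l" by blast
      then show "v \<in> {v\<in>\<Inter>S. Lq v = l}" unfolding U_def A_def ty_def by blast
    qed
    moreover have "card (\<Union>T\<in>U S. A T l) = (\<Sum>T\<in>U S. card (A T l))"
      by (rule card_UN_disjoint[OF fU], simp add: fA, auto simp: A_def)
    ultimately show ?thesis by simp
  qed
  have cntH: "card {w\<in>\<Inter>(M ` S). LH w = l} = (\<Sum>T\<in>U S. card (B T l))"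
    if S: "S \<subseteq> Eq" "S \<noteq> {}" for S l
  proof -
    have "{v\<in>\<Inter>(M ` S). LH v = l} = (\<Union>T\<in>U S. B T l)"
    proof (rule set_eqI, rule iffI)
      fix v assume "v \<in> {v\<in>\<Inter>(M ` S). LH v = l}"
      then have v: "\<forall>e\<in>S. v\<in>M e" "LH v = l" by auto
      obtain e where "e\<in>S" using S by blast
      then have "v \<in> VH" using v S MV by blast
      then have "v \<in> B (ty' v) l" using v unfolding B_def by simp
      moreover have "ty' v \<in> U S" using v S unfolding U_def ty'_def by blast
      ultimately show "v \<in> (\<Union>T\<in>U S. B T l)" by blast
    next
      fix v assume "v \<in> (\<Union>T\<in>U S. B T l)"
      then obtain T where "T\<in>U S" "v \<in> B T l" by blast
      then show "v \<in> {v\<in>\<Inter>(M ` S). LH v = l}" unfolding U_def B_def ty'_def by blast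
    qed
    moreover have "card (\<Union>T\<in>U S. B T l) = (\<Sum>T\<in>U S. card (B T l))"
      by (rule card_UN_disjoint[OF fU], simp add: fB, auto simp: B_def)
    ultimately show ?thesis by simp
  qed
  have eqS: "(\<Sum>T\<in>U S. card (A T l)) = (\<Sum>T\<in>U S. card (B T l))"
    if S: "S \<subseteq> Eq" "S \<noteq> {}" for S l
  proof -
    obtain e where e: "e \<in> S" using S by blast
    have "\<Inter>S \<subseteq> e" using e by (rule Inter_lower)
    moreover have "e \<subseteq> Vq" using e S eV by blast
    ultimately have f1: "finite (\<Inter>S)" using fVq by (meson finite_subset)
    have "\<Inter>(M ` S) \<subseteq> M e" using e by blast
    moreover have "M e \<subseteq> VH" using e S MV by blast
    ultimately have f2: "finite (\<Inter>(M ` S))" using fVH by (meson finite_subset)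
    have "count (Sig Lq (\<Inter>S)) l = count (Sig LH (\<Inter>(M ` S))) l" using H S by simp
    then show ?thesis using cntq[OF S, of l] cntH[OF S, of l] cnt_Sig[OF f1, of Lq l] cnt_Sig[OF f2, of LH l] by linarith
  qed
  have key: "\<forall>S l. S \<subseteq> Eq \<and> S \<noteq> {} \<longrightarrow> card (A S l) = card (B S l)"
  proof -
    have "\<forall>S. S \<subseteq> Eq \<and> S \<noteq> {} \<and> card (Eq - S) = n \<longrightarrow> (\<forall>l. card (A S l) = card (B S l))" for n
    proof (induction n rule: less_induct)
      case (less n)
      show ?case
      proof (intro allI impI)
        fix S l assume S: "S \<subseteq> Eq \<and> S \<noteq> {} \<and> card (Eq - S) = n"
        have U: "U S = insert S (U S - {S})" using S unfolding U_def by auto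
        have IH: "card (A T l) = card (B T l)" if T: "T \<in> U S - {S}" for T
        proof -
          have "S \<subset> T" "T \<subseteq> Eq" using T unfolding U_def by auto
          then have "card (Eq - T) < card (Eq - S)"
            using fEq by (intro psubset_card_mono) auto
          then show ?thesis using less.IH S \<open>S \<subset> T\<close> \<open>T \<subseteq> Eq\<close> by blast
        qed
        have "card (A S l) + (\<Sum>T\<in>U S - {S}. card (A T l)) = card (B S l) + (\<Sum>T\<in>U S - {S}. card (B T l))"
        proof -
          have SU: "S \<in> U S" unfolding U_def using S by simp
          show ?thesis using eqS[of S l] S sum.remove[OF fU SU, of "\<lambda>T. card (A T l)"]
            sum.remove[OF fU SU, of "\<lambda>T. card (B T l)"] by simp
        qed
        moreover have "(\<Sum>T\<in>U S - {S}. card (A T l)) = (\<Sum>T\<in>U S - {S}. card (B T l))"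
          using IH by (rule sum.cong[OF refl])
        ultimately show "card (A S l) = card (B S l)" by simp
      qed
    qed
    then show ?thesis by blast
  qed
  define f where "f S l = (SOME g. bij_betw g (A S l) (B S l))" for S l
  have fb: "bij_betw (f S l) (A S l) (B S l)" if "S \<subseteq> Eq" "S \<noteq> {}" for S l
  proof -
    have "\<exists>g. bij_betw g (A S l) (B S l)"
      using finite_same_card_bij[OF fA fB] key that by blast
    then show ?thesis unfolding f_def by (rule someI_ex)
  qed
  define \<phi> where "\<phi> v = f (ty v) (Lq v) v" for v
  have tyok: "ty v \<subseteq> Eq \<and> ty v \<noteq> {}" if "v \<in> Vq" for v
    using that UVq unfolding ty_def by auto
  have inA: "v \<in> A (ty v) (Lq v)" if "v \<in> Vq" for v using that unfolding A_def by auto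
  have inB: "\<phi> v \<in> B (ty v) (Lq v)" if v: "v \<in> Vq" for v
    using fb[of "ty v" "Lq v"] tyok[OF v] inA[OF v] unfolding \<phi>_def bij_betw_def by auto
  show "embedding Vq Eq Lq VH EH LH M"
    unfolding embedding_def
  proof (intro exI conjI ballI)
    show "inj_on \<phi> Vq"
    proof (rule inj_onI)
      fix u v assume u: "u \<in> Vq" and v: "v \<in> Vq" and e: "\<phi> u = \<phi> v"
      have "ty u = ty v" "Lq u = Lq v" using inB[OF u] inB[OF v] e unfolding B_def by auto
      then have "f (ty u) (Lq u) u = f (ty u) (Lq u) v" using e unfolding \<phi>_def by simp
      moreover have inj: "inj_on (f (ty u) (Lq u)) (A (ty u) (Lq u))"
        using fb tyok[OF u] bij_betw_def by blast
      moreover have "v \<in> A (ty u) (Lq u)" using inA[OF v] \<open>ty u = ty v\<close> \<open>Lq u = Lq v\<close> by simp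
      ultimately show "u = v" using inA[OF u] by (meson inj_onD)
    qed
    show "\<phi> ` Vq \<subseteq> VH" using inB unfolding B_def by auto
    show "LH (\<phi> u) = Lq u" if "u \<in> Vq" for u using inB[OF that] unfolding B_def by auto
    fix e assume e: "e \<in> Eq"
    show "\<phi> ` e = M e"
    proof
      show "\<phi> ` e \<subseteq> M e"
      proof
        fix w assume "w \<in> \<phi> ` e"
        then obtain v where v: "v \<in> e" "w = \<phi> v" by blast
        have vV: "v \<in> Vq" using v e eV by auto
        have "e \<in> ty v" using v e unfolding ty_def by auto
        then have "e \<in> ty' w" using inB[OF vV] v unfolding B_def by auto
        then show "w \<in> M e" unfolding ty'_def by auto
      qed
      show "M e \<subseteq> \<phi> ` e"
      proof
        fix w assume w: "w \<in> M e"
        define S where "S = ty' w"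
        have S: "S \<subseteq> Eq" "S \<noteq> {}" "e \<in> S" using w e unfolding S_def ty'_def by auto
        have "w \<in> B S (LH w)" using w e MV unfolding B_def S_def by auto
        then have "w \<in> f S (LH w) ` A S (LH w)"
          using fb[OF S(1,2), of "LH w"] unfolding bij_betw_def by simp
        then obtain v where v0: "w = f S (LH w) v" "v \<in> A S (LH w)" by (rule imageE)
        then have v: "v \<in> A S (LH w)" "f S (LH w) v = w" by simp_all
        have vV: "v \<in> Vq" and tv: "ty v = S" and lv: "Lq v = LH w" using v unfolding A_def by auto
        have "\<phi> v = w" using v tv lv unfolding \<phi>_def by simp
        moreover have "v \<in> e" using tv S(3) unfolding ty_def by auto
        ultimately show "w \<in> \<phi> ` e" by blast
      qed
    qed
  qed
qed

end
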